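(* Let $s\ge 2$. Suppose the edges of the complete graph $K_s$ are coloured with $s-1$ colours such that each colour class is a matching and every set of $4$ vertices spans edges of either exactly $3$ or exactly $6$ different colours. Then $s=2^p$ for some integer $p$. *)

theory Defs
  imports Main
begin

definition edge_colouring :: "nat \<Rightarrow> nat \<Rightarrow> (nat \<Rightarrow> nat \<Rightarrow> nat) \<Rightarrow> bool" where
  "edge_colouring s k c \<longleftrightarrow>
     (\<forall>u<s. \<forall>v<s. u \<noteq> v \<longrightarrow> c u v = c v u \<and> c u v < k)"

definition classes_are_matchings :: "nat \<Rightarrow> (nat \<Rightarrow> nat \<Rightarrow> nat) \<Rightarrow> bool" where
  "classes_are_matchings s c \<longleftrightarrow>
     (\<forall>u<s. \<forall>v<s. \<forall>w<s. u \<noteq> v \<and> u \<noteq> w \<and> v \<noteq> w \<longrightarrow> c u v \<noteq> c u w)"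

definition colours_spanned :: "(nat \<Rightarrow> nat \<Rightarrow> nat) \<Rightarrow> nat set \<Rightarrow> nat set" where
  "colours_spanned c X = {c u v | u v. u \<in> X \<and> v \<in> X \<and> u \<noteq> v}"

end

theory Submission
  imports Defs
begin

locale fact_setup =
  fixes s :: nat and c :: "nat \<Rightarrow> nat \<Rightarrow> nat"
  assumes s2: "s \<ge> 2"
    and ec: "edge_colouring s (s - 1) c"
    and cm: "classes_are_matchings s c"
    and q4: "\<forall>X. X \<subseteq> {..<s} \<and> card X = 4 \<longrightarrow>
           card (colours_spanned c X) = 3 \<or> card (colours_spanned c X) = 6"
begin

lemma csym: "u < s \<Longrightarrow> v < s \<Longrightarrow> u \<noteq> v \<Longrightarrow> c u v = c v u"
  using ec unfolding edge_colouring_def by blast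

lemma cbnd: "u < s \<Longrightarrow> v < s \<Longrightarrow> u \<noteq> v \<Longrightarrow> c u v < s - 1"
  using ec unfolding edge_colouring_def by blast

lemma cmat: "u < s \<Longrightarrow> v < s \<Longrightarrow> w < s \<Longrightarrow> u \<noteq> v \<Longrightarrow> u \<noteq> w \<Longrightarrow> v \<noteq> w \<Longrightarrow> c u v \<noteq> c u w"
  using cm unfolding classes_are_matchings_def by blast

lemma cex:
  assumes "w < s" "i < s - 1"
  shows "\<exists>u<s. u \<noteq> w \<and> c w u = i"
proof -
  let ?A = "{..<s} - {w}"
  have inj: "inj_on (c w) ?A"
    unfolding inj_on_def using cmat assms(1) by blast
  have sub: "c w ` ?A \<subseteq> {..<s-1}" using cbnd assms(1) by auto
  have "card (c w ` ?A) = card ?A" using card_image[OF inj] .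
  also have "\<dots> = s - 1" using assms(1) by simp
  finally have "c w ` ?A = {..<s-1}"
    using card_subset_eq[OF _ sub] by simp
  then have "i \<in> c w ` ?A" using assms(2) by blast
  then show ?thesis by auto
qed

lemma L1:
  assumes "a < s" "b < s" "x < s" "y < s"
    and "a \<noteq> b" "a \<noteq> x" "a \<noteq> y" "b \<noteq> x" "b \<noteq> y" "x \<noteq> y"
    and e: "c a b = c x y"
  shows "c a x = c b y"
proof (rule ccontr)
  assume ne: "c a x \<noteq> c b y"
  let ?X = "{a, b, x, y}"
  have X4: "card ?X = 4" using assms by simp
  have Xs: "?X \<subseteq> {..<s}" using assms by auto
  have s1: "c b a = c a b" "c x a = c a x" "c y a = c a y" "c x b = c b x" "c y b = c b y"
    "c x y = c a b" "c y x = c a b"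
    using csym[of b a] csym[of x a] csym[of y a] csym[of x b] csym[of y b] csym[of y x] assms
    by auto
  have eq: "colours_spanned c ?X = {c a b, c a x, c a y, c b x, c b y}"
  proof
    show "colours_spanned c ?X \<subseteq> {c a b, c a x, c a y, c b x, c b y}"
      unfolding colours_spanned_def using s1 by auto
    show "{c a b, c a x, c a y, c b x, c b y} \<subseteq> colours_spanned c ?X"
      unfolding colours_spanned_def using assms(5-10) e by auto
  qed
  have "card {c a b, c a x, c a y, c b x, c b y} \<le> 5"
    using card_length[of "[c a b, c a x, c a y, c b x, c b y]"] by simp
  then have c3: "card {c a b, c a x, c a y, c b x, c b y} = 3"
  proof -
    have "card (colours_spanned c ?X) = 3 \<or> card (colours_spanned c ?X) = 6"
      using q4 Xs X4 by blast
    then show ?thesis using eq \<open>card {c a b, c a x, c a y, c b x, c b y} \<le> 5\<close> by auto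
  qed
  have d1: "c a b \<noteq> c a x" "c a b \<noteq> c a y" "c a x \<noteq> c a y"
    using cmat[of a b x] cmat[of a b y] cmat[of a x y] assms by auto
  have d2: "c a b \<noteq> c b y" using cmat[of b a y] assms(1-10) s1(1) by auto
  have d3: "c a y \<noteq> c b y" using cmat[of y a b] assms(1-10) s1(3,5) by auto
  have "{c a b, c a x, c a y, c b y} \<subseteq> {c a b, c a x, c a y, c b x, c b y}" by auto
  then have "card {c a b, c a x, c a y, c b y} \<le> 3"
    using c3 by (metis card_mono finite.emptyI finite.insertI)
  moreover have "card {c a b, c a x, c a y, c b y} = 4"
    using d1 d2 d3 ne by simp
  ultimately show False by simp
qed

definition d :: "nat \<Rightarrow> nat \<Rightarrow> nat" where
  "d v w = (if v = w then s - 1 else c v w)"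

lemma dsym: "v < s \<Longrightarrow> w < s \<Longrightarrow> d v w = d w v"
  unfolding d_def using csym by auto

lemma dU: assumes "v < s" "u < s" "u' < s" "d v u = d v u'" shows "u = u'"
proof -
  consider "u = v" "u' = v" | "u = v" "u' \<noteq> v" | "u \<noteq> v" "u' = v" | "u \<noteq> v" "u' \<noteq> v" by blast
  then show ?thesis
  proof cases
    case 2 then show ?thesis using assms cbnd[of v u'] unfolding d_def by auto
  next
    case 3 then show ?thesis using assms cbnd[of v u] unfolding d_def by auto
  next
    case 4 then show ?thesis using assms cmat[of v u u'] unfolding d_def by auto
  qed auto
qed

lemma dP: assumes "a < s" "b < s" "x < s" "y < s" "d a b = d x y" shows "d a x = d b y"
proof (cases "a = b")
  case True
  then have "x = y" using assms cbnd[of x y] unfolding d_def by (auto split: if_splits)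
  then show ?thesis using True by simp
next
  case ab: False
  then have xy: "x \<noteq> y" using assms cbnd[of a b] unfolding d_def by (auto split: if_splits)
  show ?thesis
  proof (cases "a = x")
    case True
    then have "d a b = d a y" using assms(5) by simp
    then have "b = y" using dU[of a b y] assms(1,2,4) by blast
    then show ?thesis using True by (simp add: d_def)
  next
    case ax: False
    show ?thesis
    proof (cases "a = y")
      case True
      have e1: "d a b = d x a" using assms(5) True by simp
      have "d a b = d a x" using trans[OF e1 dsym[of x a]] assms(1,3) by blast
      then have "b = x" using dU[of a b x] assms(1,2,3) by blast
      then show ?thesis using True dsym[of a b] assms(1,2) by simp
    next
      case ay: False
      show ?thesis
      proof (cases "b = x")
        case True
        have e1: "d a b = d b y" using assms(5) True by simp
        have "d b a = d b y" using trans[OF sym[OF dsym[of a b]] e1] assms(1,2) by blast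
        then have "a = y" using dU[of b a y] assms(1,2,4) by blast
        then show ?thesis using True dsym[of a b] assms(1,2) by simp
      next
        case bx: False
        show ?thesis
        proof (cases "b = y")
          case True
          have e1: "d a b = d x b" using assms(5) True by simp
          have "d b a = d b x" using trans[OF trans[OF sym[OF dsym[of a b]] e1] dsym[of x b]] assms(1-3) by blast
          then have "a = x" using dU[of b a x] assms(1,2,3) by blast
          then show ?thesis using True by (simp add: d_def)
        next
          case by': False
          have "c a b = c x y" using assms ab xy unfolding d_def by simp
          then have "c a x = c b y" using L1[of a b x y] assms(1-4) ab xy ax ay bx by' by simp
          then show ?thesis using ax by' unfolding d_def by simp
        qed
      qed
    qed
  qed
qed

lemma dE: assumes "w < s" "g < s" shows "\<exists>u<s. d w u = d 0 g"
proof (cases "g = 0")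
  case True then show ?thesis using assms by (auto simp: d_def)
next
  case False
  have "c 0 g < s - 1" using cbnd[of 0 g] assms False by simp
  then obtain u where "u < s" "u \<noteq> w" "c w u = c 0 g" using cex assms by blast
  then show ?thesis using False by (auto simp: d_def)
qed

definition T :: "nat \<Rightarrow> nat \<Rightarrow> nat" where
  "T g w = (THE u. u < s \<and> d w u = d 0 g)"

lemma T: assumes "g < s" "w < s" shows "T g w < s \<and> d w (T g w) = d 0 g"
proof -
  obtain u where u: "u < s" "d w u = d 0 g" using dE assms by blast
  have "\<exists>!u. u < s \<and> d w u = d 0 g"
    using u dU assms by (metis)
  then show ?thesis unfolding T_def by (rule theI')
qed

lemma Tlt: "g < s \<Longrightarrow> w < s \<Longrightarrow> T g w < s" using T by blast
lemma Td: "g < s \<Longrightarrow> w < s \<Longrightarrow> d w (T g w) = d 0 g" using T by blast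

lemma Tuniq: assumes "g < s" "w < s" "u < s" "d w u = d 0 g" shows "T g w = u"
  using dU[of w "T g w" u] T[OF assms(1,2)] assms by simp

lemma s0: "0 < s" using s2 by simp

lemma T0: "w < s \<Longrightarrow> T 0 w = w"
  using Tuniq[of 0 w w] s0 by (simp add: d_def)

lemma Tcomm: assumes "a < s" "b < s" shows "T a b = T b a"
proof -
  let ?u = "T a b"
  have u: "?u < s" "d b ?u = d 0 a" using T assms by auto
  have "d b 0 = d ?u a" using dP[of b ?u 0 a] u assms s0 by simp
  then have "d a ?u = d 0 b" using dsym assms u s0 by metis
  then show ?thesis using Tuniq[of b a ?u] assms u by simp
qed

lemma Tinv: assumes "g < s" "w < s" shows "T g (T g w) = w"
  using Tuniq[of g "T g w" w] T[OF assms] dsym[of w "T g w"] assms by simp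

lemma Tassoc: assumes "a < s" "b < s" "x < s" shows "T a (T b x) = T (T a b) x"
proof -
  define y where "y = T b x"
  define z where "z = T a y"
  define m where "m = T a b"
  have y: "y < s" "d x y = d 0 b" using T assms y_def by auto
  have z: "z < s" "d y z = d 0 a" using T assms y z_def by auto
  have m: "m < s" "d b m = d 0 a" using T assms m_def by auto
  have "d y b = d z m" using dP[of y z b m] y z m assms by simp
  moreover have "d x 0 = d y b" using dP[of x y 0 b] y assms s0 by simp
  ultimately have "d x z = d 0 m" using dP[of x 0 z m] y z m assms s0 by simp
  then have "T m x = z" using Tuniq[of m x z] m z assms by simp
  then show ?thesis using y_def z_def m_def by simp
qed

lemma Tswap: assumes "a < s" "g < s" "x < s" shows "T a (T g x) = T g (T a x)"
  using Tassoc Tcomm assms by metis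

definition closed :: "nat set \<Rightarrow> bool" where
  "closed H \<longleftrightarrow> H \<subseteq> {..<s} \<and> 0 \<in> H \<and> (\<forall>a\<in>H. \<forall>b\<in>H. T a b \<in> H)"

lemma double:
  assumes H: "closed H" and g: "g < s" "g \<notin> H"
  shows "closed (H \<union> T g ` H) \<and> card (H \<union> T g ` H) = 2 * card H"
proof -
  have Hs: "H \<subseteq> {..<s}" and H0: "0 \<in> H" and HT: "\<And>a b. a \<in> H \<Longrightarrow> b \<in> H \<Longrightarrow> T a b \<in> H"
    using H unfolding closed_def by auto
  have fin: "finite H" using Hs finite_subset by blast
  have inj: "inj_on (T g) H"
  proof (rule inj_onI)
    fix x y assume "x \<in> H" "y \<in> H" "T g x = T g y"
    then show "x = y" using Tinv[of g x] Tinv[of g y] g Hs by (metis lessThan_iff subsetD)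
  qed
  have disj: "H \<inter> T g ` H = {}"
  proof (rule ccontr)
    assume "H \<inter> T g ` H \<noteq> {}"
    then obtain h where h: "h \<in> H" "T g h \<in> H" by blast
    have "h < s" using h Hs by auto
    then have "T h (T g h) = g" using Tcomm[of g h] Tinv[of h g] g by simp
    then show False using HT[OF h(1) h(2)] g by simp
  qed
  have card: "card (H \<union> T g ` H) = 2 * card H"
    using card_Un_disjoint[OF fin finite_imageI[OF fin] disj] card_image[OF inj] by simp
  have lt: "\<And>h. h \<in> H \<Longrightarrow> h < s" using Hs by auto
  have cl: "\<forall>a\<in>H \<union> T g ` H. \<forall>b\<in>H \<union> T g ` H. T a b \<in> H \<union> T g ` H"
  proof (intro ballI)
    fix a b assume a: "a \<in> H \<union> T g ` H" and b: "b \<in> H \<union> T g ` H"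
    show "T a b \<in> H \<union> T g ` H"
    proof (cases "a \<in> H")
      case aH: True
      show ?thesis
      proof (cases "b \<in> H")
        case True then show ?thesis using HT aH by blast
      next
        case False
        then obtain h where h: "h \<in> H" "b = T g h" using b by blast
        have "T a b = T g (T a h)" using Tswap[of a g h] h aH lt g by simp
        then show ?thesis using HT[OF aH h(1)] by blast
      qed
    next
      case False
      then obtain h where h: "h \<in> H" "a = T g h" using a by blast
      show ?thesis
      proof (cases "b \<in> H")
        case True
        have "T a b = T g (T h b)" using Tassoc[of g h b] h True lt g by simp
        then show ?thesis using HT[OF h(1) True] by blast
      next
        case False
        then obtain h' where h': "h' \<in> H" "b = T g h'" using b by blast
        have "T a b = T g (T h (T g h'))" using Tassoc[of g h "T g h'"] h h' lt g Tlt by simp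
        also have "\<dots> = T g (T g (T h h'))" using Tswap[of h g h'] h h' lt g by simp
        also have "\<dots> = T h h'" using Tinv g Tlt h h' lt by simp
        finally have "T a b = T h h'" .
        then show ?thesis using HT[OF h(1) h'(1)] by simp
      qed
    qed
  qed
  have "T g ` H \<subseteq> {..<s}" using Tlt g lt by auto
  then have "closed (H \<union> T g ` H)" using cl Hs H0 unfolding closed_def by auto
  then show ?thesis using card by simp
qed

lemma main: "\<exists>p::nat. s = 2 ^ p"
proof -
  define S where "S = {n. \<exists>H. closed H \<and> card H = 2 ^ n}"
  have Sb: "S \<subseteq> {..s}"
  proof
    fix n assume "n \<in> S"
    then obtain H where "closed H" "card H = 2 ^ n" unfolding S_def by blast
    then have "2 ^ n \<le> s" unfolding closed_def by (metis card_lessThan card_mono finite_lessThan)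
    moreover have "n < 2 ^ n" by simp
    ultimately have "n \<le> s" by linarith
    then show "n \<in> {..s}" by simp
  qed
  have finS: "finite S" using Sb finite_subset by blast
  have "closed {0}" unfolding closed_def using T0 s0 by auto
  then have "0 \<in> S" unfolding S_def by force
  then have NS: "Max S \<in> S" using finS Max_in by blast
  then obtain H where H: "closed H" "card H = 2 ^ Max S" unfolding S_def by blast
  show ?thesis
  proof (cases "H = {..<s}")
    case True then show ?thesis using H by auto
  next
    case False
    then obtain g where g: "g < s" "g \<notin> H" using H unfolding closed_def by blast
    then have "Suc (Max S) \<in> S" using double[OF H(1) g] H unfolding S_def by auto
    then show ?thesis using Max_ge[OF finS] by fastforce
  qed
qed

end

theorem lemma4p2:
  fixes s :: nat and c :: "nat \<Rightarrow> nat \<Rightarrow> nat"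
  assumes "s \<ge> 2"
    and "edge_colouring s (s - 1) c"
    and "classes_are_matchings s c"
    and "\<forall>X. X \<subseteq> {..<s} \<and> card X = 4 \<longrightarrow>
           card (colours_spanned c X) = 3 \<or> card (colours_spanned c X) = 6"
  shows "\<exists>p::nat. s = 2 ^ p"
proof -
  interpret fact_setup s c using assms by unfold_locales
  show ?thesis by (rule main)
qed

end
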